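(* Let $D$ be a distribution over $\mathcal{Z}$ and let $f:\mathbb{R}^d\times\mathcal{Z}\to\mathbb{R}$ be such that $f(\cdot;z)$ is convex and $L$-Lipschitz for every $z$. Fix $\eta>0$, $T\in\mathbb{N}$. Then there is a universal constant $C$ such that the GD iterates on the empirical risk and on the population risk satisfy \[ \forall t\in[T]:\quad \mathbb{E}_{S\sim D^n}\big[\|w_t^S-w_t^D\|\big]\le C\Big(\frac{\eta Lt}{\sqrt n}+\eta L\sqrt t\Big). \] (Explicitly, one may take $\mathbb{E}\|w_{t+1}^S-w_{t+1}^D\|\le \frac{4\eta L(t+1)}{\sqrt n}+4\eta L\sqrt{t+1}$.)
   Context: Empirical risk on $S=(z_1,\dots,z_n)$: $F_S(w)=\frac1n\sum_i f(w;z_i)$; population risk $F_D(w)=\mathbb{E}_{z\sim D}f(w;z)$. Fix a (measurable) subgradient selection $g(w;z)\in\partial_w f(w;z)$. GD on the sample: $w_0^S=0$, $w_{t+1}^S=w_t^S-\eta\frac1n\sum_{i=1}^n g(w_t^S;z_i)$. GD on the population: $w_0^D=0$, $w_{t+1}^D=w_t^D-\eta\,\mathbb{E}_{z\sim D}[g(w_t^D;z)]$. *)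

theory Defs
  imports "HOL-Probability.Probability"
begin

definition is_subgradient :: "('a::euclidean_space \<Rightarrow> real) \<Rightarrow> 'a \<Rightarrow> 'a \<Rightarrow> bool" where
  "is_subgradient h w v \<longleftrightarrow> (\<forall>u. h u \<ge> h w + inner v (u - w))"

primrec gd_sample :: "real \<Rightarrow> ('a::euclidean_space \<Rightarrow> 'z \<Rightarrow> 'a) \<Rightarrow> nat \<Rightarrow> (nat \<Rightarrow> 'z) \<Rightarrow> nat \<Rightarrow> 'a" where
  "gd_sample \<eta> g n S 0 = 0"
| "gd_sample \<eta> g n S (Suc t) =
     gd_sample \<eta> g n S t - \<eta> *\<^sub>R ((1 / real n) *\<^sub>R (\<Sum>i<n. g (gd_sample \<eta> g n S t) (S i)))"

primrec gd_pop :: "real \<Rightarrow> ('a::euclidean_space \<Rightarrow> 'z \<Rightarrow> 'a) \<Rightarrow> 'z measure \<Rightarrow> nat \<Rightarrow> 'a" where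
  "gd_pop \<eta> g D 0 = 0"
| "gd_pop \<eta> g D (Suc t) =
     gd_pop \<eta> g D t - \<eta> *\<^sub>R (\<integral>z. g (gd_pop \<eta> g D t) z \<partial>D)"

end

theory Submission
  imports Defs
begin


lemma rec_sq:
  fixes d a :: "nat \<Rightarrow> real" and b c :: real
  assumes d0: "d 0 = 0" and st: "\<And>t. d (Suc t)^2 \<le> d t^2 + b * d t * a t + c^2"
  shows "d t^2 \<le> (\<Sum>s<t. b * d s * a s) + c^2 * real t"
proof (induction t)
  case 0 then show ?case using d0 by simp
next
  case (Suc t) then show ?case using st[of t] by (simp add: algebra_simps)
qed

lemma rec_bound:
  fixes d a :: "nat \<Rightarrow> real" and b c :: real
  assumes d0: "d 0 = 0" and st: "\<And>t. d (Suc t)^2 \<le> d t^2 + b * d t * a t + c^2"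
    and dn: "\<And>t. d t \<ge> 0" and an: "\<And>t. a t \<ge> 0" and b: "b \<ge> 0" and c: "c \<ge> 0"
  shows "d t \<le> b * (\<Sum>s<t. a s) + c * sqrt (real t)"
proof -
  define R where "R t = b * (\<Sum>s<t. a s) + c * sqrt (real t)" for t
  have Rmono: "R s \<le> R t" if "s \<le> t" for s t
  proof -
    have "(\<Sum>i<s. a i) \<le> (\<Sum>i<t. a i)" using that an by (intro sum_mono2) auto
    moreover have "sqrt (real s) \<le> sqrt (real t)" using that by simp
    ultimately show ?thesis unfolding R_def using b c
      by (intro add_mono mult_left_mono) auto
  qed
  have "\<forall>s\<le>t. d s \<le> R s"
  proof (induction t)
    case 0 then show ?case using d0 by (simp add: R_def)
  next
    case (Suc t)
    define P where "P = b * (\<Sum>s<Suc t. a s)"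
    define q where "q = c * sqrt (real (Suc t))"
    have P0: "P \<ge> 0" unfolding P_def using b an by (simp add: sum_nonneg)
    have q0: "q \<ge> 0" unfolding q_def using c by simp
    have RS: "R (Suc t) = P + q" by (simp add: R_def P_def q_def)
    have le: "d s \<le> P + q" if "s \<le> t" for s
      using Suc.IH that Rmono[of s "Suc t"] RS by auto
    have r: "d (Suc t)^2 \<le> (\<Sum>s<Suc t. b * d s * a s) + c^2 * real (Suc t)"
      by (rule rec_sq[OF d0 st])
    have "(\<Sum>s<Suc t. b * d s * a s) \<le> (\<Sum>s<Suc t. b * (P + q) * a s)"
      using le b an by (intro sum_mono mult_right_mono mult_left_mono) auto
    also have "(\<Sum>s<Suc t. b * (P + q) * a s) = (b * (P + q)) * (\<Sum>s<Suc t. a s)"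
      by (rule sum_distrib_left[symmetric])
    also have "\<dots> = (P + q) * (b * (\<Sum>s<Suc t. a s))" by (rule mult.left_commute[THEN trans[OF mult.assoc]])
    also have "\<dots> = (P + q) * P" by (simp only: P_def)
    finally have s1: "(\<Sum>s<Suc t. b * d s * a s) \<le> (P + q) * P" .
    have "c^2 * real (Suc t) = q^2" by (simp add: q_def power_mult_distrib)
    with r s1 have f1: "d (Suc t)^2 \<le> (P + q) * P + q^2" by linarith
    have e2: "(P + q)^2 = (P + q) * P + q^2 + P * q" by algebra
    have pq: "0 \<le> P * q" using P0 q0 by simp
    have "(P + q) * P + q^2 \<le> (P + q)^2" using e2 pq by linarith
    with f1 have "d (Suc t)^2 \<le> (P + q)^2" by (rule order_trans)
    moreover have "0 \<le> P + q" using P0 q0 by linarith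
    ultimately have "d (Suc t) \<le> P + q" by (rule power2_le_imp_le)
    then show ?case using Suc.IH RS le_Suc_eq by auto
  qed
  then show ?thesis by (simp add: R_def)
qed

locale gdset =
  fixes D :: "'z measure" and f :: "'a::euclidean_space \<Rightarrow> 'z \<Rightarrow> real"
    and g :: "'a \<Rightarrow> 'z \<Rightarrow> 'a" and L \<eta> :: real and n :: nat
  assumes PD: "prob_space D"
    and lip: "\<forall>z\<in>space D. L-lipschitz_on UNIV (\<lambda>w. f w z)"
    and sub: "\<forall>z\<in>space D. \<forall>w. is_subgradient (\<lambda>u. f u z) w (g w z)"
    and meas: "(\<lambda>(w, z). g w z) \<in> borel_measurable (borel \<Otimes>\<^sub>M D)"
    and eta: "\<eta> > 0" and n1: "n \<ge> 1"
begin

lemma L_nonneg: "0 \<le> L"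
proof -
  interpret prob_space D by (rule PD)
  obtain z where "z \<in> space D" using not_empty by blast
  with lip show ?thesis by (auto simp: lipschitz_on_def)
qed

lemma g_bound: assumes "z \<in> space D" shows "norm (g w z) \<le> L"
proof -
  let ?v = "g w z"
  have s: "f (w + ?v) z \<ge> f w z + inner ?v ?v"
    using sub assms unfolding is_subgradient_def by (metis add_diff_cancel_left')
  have l: "f (w + ?v) z - f w z \<le> L * norm ?v"
  proof -
    have "norm (f (w + ?v) z - f w z) \<le> L * norm (w + ?v - w)"
      using lip assms unfolding lipschitz_on_def dist_norm by blast
    then show ?thesis by simp
  qed
  have "norm ?v ^ 2 \<le> L * norm ?v" using s l by (simp add: power2_norm_eq_inner)
  then show ?thesis
    by (cases "norm ?v = 0") (auto simp: power2_eq_square L_nonneg)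
qed

lemma g_meas[measurable]: "(\<lambda>z. g v z) \<in> borel_measurable D"
proof -
  have "(\<lambda>z. (\<lambda>(w, z). g w z) (v, z)) \<in> borel_measurable D"
    using meas by measurable
  then show ?thesis by simp
qed

lemma g_int: "integrable D (\<lambda>z. g v z)"
proof -
  interpret prob_space D by (rule PD)
  show ?thesis by (rule integrable_const_bound[where B=L]) (auto simp: g_bound)
qed

definition "mu v = (\<integral>z. g v z \<partial>D)"

lemma mu_bound: "norm (mu v) \<le> L"
proof -
  interpret prob_space D by (rule PD)
  have "norm (mu v) \<le> (\<integral>z. norm (g v z) \<partial>D)" unfolding mu_def by (rule integral_norm_bound)
  also have "\<dots> \<le> (\<integral>z. L \<partial>D)"
    by (rule integral_mono) (auto simp: g_bound g_int)
  finally show ?thesis by (simp add: prob_space)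
qed

lemma mono_g: assumes "z \<in> space D" shows "inner (u - v) (g u z - g v z) \<ge> 0"
proof -
  have 1: "f v z \<ge> f u z + inner (g u z) (v - u)" and 2: "f u z \<ge> f v z + inner (g v z) (u - v)"
    using sub assms unfolding is_subgradient_def by auto
  have "inner (g u z) (v - u) = - inner (u - v) (g u z)"
    by (metis inner_commute inner_minus_right minus_diff_eq)
  with 1 2 show ?thesis by (simp add: inner_diff_right inner_commute)
qed

lemma norm_sq_expand: "norm (a - c *\<^sub>R b)^2 = norm a^2 - 2 * c * inner a b + c^2 * norm (b::'a)^2"
proof -
  have "norm (a - c *\<^sub>R b)^2 = inner (a - c *\<^sub>R b) (a - c *\<^sub>R b)" by (simp only: power2_norm_eq_inner)
  also have "\<dots> = inner a a - 2 * c * inner a b + c^2 * inner b b"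
    by (simp add: inner_diff_left inner_diff_right inner_commute power2_eq_square algebra_simps)
  finally show ?thesis by (simp only: power2_norm_eq_inner)
qed

definition "GS S w = (1 / real n) *\<^sub>R (\<Sum>i<n. g w (S i))"
definition "Delta t S = GS S (gd_pop \<eta> g D t) - mu (gd_pop \<eta> g D t)"

lemma GS_bound: assumes "\<forall>i<n. S i \<in> space D" shows "norm (GS S w) \<le> L"
proof -
  have "norm (\<Sum>i<n. g w (S i)) \<le> (\<Sum>i<n. L)"
    by (rule order_trans[OF norm_sum sum_mono]) (use assms g_bound in auto)
  then show ?thesis using n1 by (simp add: GS_def field_simps)
qed

lemma GS_mono: assumes "\<forall>i<n. S i \<in> space D" shows "inner (u - v) (GS S u - GS S v) \<ge> 0"
proof -
  have "GS S u - GS S v = (1 / real n) *\<^sub>R (\<Sum>i<n. g u (S i) - g v (S i))"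
    by (simp add: GS_def sum_subtractf scaleR_diff_right)
  then have "inner (u - v) (GS S u - GS S v) = (1 / real n) * (\<Sum>i<n. inner (u - v) (g u (S i) - g v (S i)))"
    by (simp add: inner_sum_right)
  also have "\<dots> \<ge> 0" using assms mono_g by (intro mult_nonneg_nonneg sum_nonneg) auto
  finally show ?thesis .
qed

lemma step:
  assumes S: "\<forall>i<n. S i \<in> space D"
  shows "norm (gd_sample \<eta> g n S (Suc t) - gd_pop \<eta> g D (Suc t))^2
     \<le> norm (gd_sample \<eta> g n S t - gd_pop \<eta> g D t)^2
        + 2 * \<eta> * norm (gd_sample \<eta> g n S t - gd_pop \<eta> g D t) * norm (Delta t S) + 4 * \<eta>^2 * L^2"
proof -
  define u where "u = gd_sample \<eta> g n S t"
  define v where "v = gd_pop \<eta> g D t"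
  define X where "X = GS S u - mu v"
  have e: "gd_sample \<eta> g n S (Suc t) - gd_pop \<eta> g D (Suc t) = (u - v) - \<eta> *\<^sub>R X"
    by (simp add: u_def v_def X_def GS_def mu_def algebra_simps)
  have Xs: "X = (GS S u - GS S v) + Delta t S"
    by (simp add: X_def Delta_def v_def)
  have i1: "inner (u - v) (GS S u - GS S v) \<ge> 0" using GS_mono S by blast
  have i2: "inner (u - v) (Delta t S) \<ge> - (norm (u - v) * norm (Delta t S))"
    using Cauchy_Schwarz_ineq2[of "u - v" "Delta t S"] by (simp add: abs_le_iff)
  have i3: "inner (u - v) X \<ge> - (norm (u - v) * norm (Delta t S))"
    using i1 i2 by (simp add: Xs inner_add_right)
  have nX: "norm X \<le> 2 * L"
    using norm_triangle_ineq4[of "GS S u" "mu v"] GS_bound[OF S, of u] mu_bound[of v]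
    by (simp add: X_def)
  have nX2: "norm X ^ 2 \<le> (2 * L) ^ 2"
    by (rule power_mono[OF nX]) simp
  have "norm ((u - v) - \<eta> *\<^sub>R X)^2 = norm (u - v)^2 - 2 * \<eta> * inner (u - v) X + \<eta>^2 * norm X ^ 2"
    by (rule norm_sq_expand)
  also have "\<dots> \<le> norm (u - v)^2 + 2 * \<eta> * norm (u - v) * norm (Delta t S) + \<eta>^2 * (2 * L)^2"
  proof -
    have "- (2 * \<eta> * inner (u - v) X) \<le> 2 * \<eta> * norm (u - v) * norm (Delta t S)"
      using mult_left_mono[OF i3, of "2*\<eta>"] eta by (simp add: algebra_simps)
    moreover have "\<eta>^2 * norm X ^ 2 \<le> \<eta>^2 * (2 * L)^2" using nX2 by (simp add: mult_left_mono)
    ultimately show ?thesis by linarith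
  qed
  finally show ?thesis unfolding e u_def v_def by (simp add: power_mult_distrib algebra_simps)
qed

lemma cross_zero:
  fixes h :: "'z \<Rightarrow> 'a"
  assumes hm[measurable]: "h \<in> borel_measurable D" and hb: "\<And>z. z \<in> space D \<Longrightarrow> norm (h z) \<le> B"
    and h0: "(\<integral>z. h z \<partial>D) = 0" and ij: "i < n" "j < n" "i \<noteq> j"
  shows "(\<integral>S. inner (h (S i)) (h (S j)) \<partial>(PiM {..<n} (\<lambda>_. D))) = 0"
proof -
  interpret D: prob_space D by (rule PD)
  interpret PS: product_sigma_finite "\<lambda>_. D"
    by (simp add: product_sigma_finite_def D.sigma_finite_measure_axioms)
  have hint: "integrable D h" by (rule D.integrable_const_bound[where B=B]) (auto simp: hb)
  have hbint: "integrable D (\<lambda>z. h z \<bullet> b)" for b using hint by auto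
  have hb0: "(\<integral>z. h z \<bullet> b \<partial>D) = 0" for b using h0 hint by simp
  define F where "F b k = (if k = i \<or> k = j then (\<lambda>z. h z \<bullet> b) else (\<lambda>z. 1::real))" for b k
  have Fint: "integrable D (F b k)" for b k by (auto simp: F_def hbint)
  have prodeq: "(\<Prod>k\<in>{..<n}. F b k (S k)) = (h (S i) \<bullet> b) * (h (S j) \<bullet> b)" for b S
  proof -
    have "(\<Prod>k\<in>{..<n}. F b k (S k)) = (\<Prod>k\<in>{i,j}. F b k (S k))"
      by (rule prod.mono_neutral_right) (use ij in \<open>auto simp: F_def\<close>)
    also have "\<dots> = (h (S i) \<bullet> b) * (h (S j) \<bullet> b)" using ij by (simp add: F_def)
    finally show ?thesis .
  qed
  have each: "(\<integral>S. (h (S i) \<bullet> b) * (h (S j) \<bullet> b) \<partial>(PiM {..<n} (\<lambda>_. D))) = 0" for b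
  proof -
    have "(\<integral>S. (h (S i) \<bullet> b) * (h (S j) \<bullet> b) \<partial>(PiM {..<n} (\<lambda>_. D)))
        = (\<integral>S. (\<Prod>k\<in>{..<n}. F b k (S k)) \<partial>(PiM {..<n} (\<lambda>_. D)))" by (simp add: prodeq)
    also have "\<dots> = (\<Prod>k\<in>{..<n}. integral\<^sup>L D (F b k))"
      by (rule PS.product_integral_prod) (auto simp: Fint)
    also have "\<dots> = 0"
      using ij hb0 by (intro prod_zero) (auto simp: F_def intro!: bexI[of _ i])
    finally show ?thesis .
  qed
  have intb: "integrable (PiM {..<n} (\<lambda>_. D)) (\<lambda>S. (h (S i) \<bullet> b) * (h (S j) \<bullet> b))" for b
  proof -
    have "integrable (PiM {..<n} (\<lambda>_. D)) (\<lambda>S. (\<Prod>k\<in>{..<n}. F b k (S k)))"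
      by (rule PS.product_integrable_prod) (auto simp: Fint)
    then show ?thesis by (simp add: prodeq)
  qed
  have "(\<integral>S. inner (h (S i)) (h (S j)) \<partial>(PiM {..<n} (\<lambda>_. D)))
      = (\<integral>S. (\<Sum>b\<in>Basis. (h (S i) \<bullet> b) * (h (S j) \<bullet> b)) \<partial>(PiM {..<n} (\<lambda>_. D)))"
    by (intro Bochner_Integration.integral_cong refl euclidean_inner)
  also have "\<dots> = (\<Sum>b\<in>Basis. (\<integral>S. (h (S i) \<bullet> b) * (h (S j) \<bullet> b) \<partial>(PiM {..<n} (\<lambda>_. D))))"
    by (rule Bochner_Integration.integral_sum) (simp add: intb)
  also have "\<dots> = 0" by (simp add: each)
  finally show ?thesis .
qed

lemma E_sq_sum:
  fixes h :: "'z \<Rightarrow> 'a"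
  assumes hm[measurable]: "h \<in> borel_measurable D" and hb: "\<And>z. z \<in> space D \<Longrightarrow> norm (h z) \<le> B"
    and h0: "(\<integral>z. h z \<partial>D) = 0"
  shows "(\<integral>S. norm (\<Sum>i<n. h (S i))^2 \<partial>(PiM {..<n} (\<lambda>_. D))) \<le> real n * B^2"
proof -
  interpret D: prob_space D by (rule PD)
  interpret P: prob_space "PiM {..<n} (\<lambda>_. D)" by (rule prob_space_PiM) (rule PD)
  have B0: "B \<ge> 0" using hb D.not_empty by (meson ex_in_conv norm_ge_zero order_trans)
  have sp: "S \<in> space (PiM {..<n} (\<lambda>_. D)) \<Longrightarrow> i < n \<Longrightarrow> S i \<in> space D" for S i
    by (auto simp: space_PiM PiE_iff)
  have mi: "(\<lambda>S. h (S k)) \<in> borel_measurable (PiM {..<n} (\<lambda>_. D))" if "k < n" for k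
  proof -
    have "(\<lambda>S. S k) \<in> measurable (PiM {..<n} (\<lambda>_. D)) D"
      using measurable_component_singleton[of k "{..<n}" "\<lambda>_. D"] that by simp
    then show ?thesis using hm by (rule measurable_compose)
  qed
  have int_ij: "integrable (PiM {..<n} (\<lambda>_. D)) (\<lambda>S. inner (h (S i)) (h (S j)))" if "i < n" "j < n" for i j
  proof (rule P.integrable_const_bound[where B="B*B"])
    show "AE S in PiM {..<n} (\<lambda>_. D). norm (inner (h (S i)) (h (S j))) \<le> B * B"
    proof (rule AE_I2)
      fix S assume S: "S \<in> space (PiM {..<n} (\<lambda>_. D))"
      have "norm (inner (h (S i)) (h (S j))) \<le> norm (h (S i)) * norm (h (S j))"
        using Cauchy_Schwarz_ineq2 by simp
      also have "\<dots> \<le> B * B" using hb sp[OF S] that B0 by (intro mult_mono) auto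
      finally show "norm (inner (h (S i)) (h (S j))) \<le> B * B" .
    qed
    show "(\<lambda>S. inner (h (S i)) (h (S j))) \<in> borel_measurable (PiM {..<n} (\<lambda>_. D))"
      using that by (intro borel_measurable_inner mi)
  qed
  have e_ij: "(\<integral>S. inner (h (S i)) (h (S j)) \<partial>(PiM {..<n} (\<lambda>_. D))) \<le> (if i = j then B^2 else 0)"
    if "i < n" "j < n" for i j
  proof (cases "i = j")
    case True
    have "(\<integral>S. inner (h (S i)) (h (S j)) \<partial>(PiM {..<n} (\<lambda>_. D))) \<le> (\<integral>S. B^2 \<partial>(PiM {..<n} (\<lambda>_. D)))"
    proof (rule integral_mono)
      show "integrable (PiM {..<n} (\<lambda>_. D)) (\<lambda>S. inner (h (S i)) (h (S j)))" using int_ij that .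
      show "integrable (PiM {..<n} (\<lambda>_. D)) (\<lambda>S. B^2)" by simp
      fix S assume S: "S \<in> space (PiM {..<n} (\<lambda>_. D))"
      have "inner (h (S i)) (h (S i)) = norm (h (S i))^2" by (simp add: power2_norm_eq_inner)
      also have "\<dots> \<le> B^2" using hb sp[OF S] that by (intro power_mono) auto
      finally show "inner (h (S i)) (h (S j)) \<le> B^2" using True by simp
    qed
    then show ?thesis using True by (simp add: P.prob_space)
  next
    case False
    then show ?thesis using cross_zero[OF hm hb h0 that False] by simp
  qed
  have "(\<integral>S. norm (\<Sum>i<n. h (S i))^2 \<partial>(PiM {..<n} (\<lambda>_. D)))
      = (\<integral>S. (\<Sum>i<n. \<Sum>j<n. inner (h (S i)) (h (S j))) \<partial>(PiM {..<n} (\<lambda>_. D)))"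
    unfolding power2_norm_eq_inner inner_sum_left inner_sum_right by (subst sum.swap) (rule refl)
  also have "\<dots> = (\<Sum>i<n. \<Sum>j<n. (\<integral>S. inner (h (S i)) (h (S j)) \<partial>(PiM {..<n} (\<lambda>_. D))))"
  proof -
    have "(\<integral>S. (\<Sum>i<n. \<Sum>j<n. inner (h (S i)) (h (S j))) \<partial>(PiM {..<n} (\<lambda>_. D)))
       = (\<Sum>i<n. (\<integral>S. (\<Sum>j<n. inner (h (S i)) (h (S j))) \<partial>(PiM {..<n} (\<lambda>_. D))))"
      by (rule Bochner_Integration.integral_sum) (auto intro!: Bochner_Integration.integrable_sum int_ij)
    also have "\<dots> = (\<Sum>i<n. \<Sum>j<n. (\<integral>S. inner (h (S i)) (h (S j)) \<partial>(PiM {..<n} (\<lambda>_. D))))"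
      by (intro sum.cong refl Bochner_Integration.integral_sum) (auto intro!: int_ij)
    finally show ?thesis .
  qed
  also have "\<dots> \<le> (\<Sum>i<n. \<Sum>j<n. (if i = j then B^2 else 0))"
    using e_ij by (intro sum_mono) auto
  also have "\<dots> = real n * B^2" by simp
  finally show ?thesis .
qed

lemma comp_meas:
  assumes hm: "h \<in> borel_measurable D" and "k < n"
  shows "(\<lambda>S. h (S k)) \<in> borel_measurable (PiM {..<n} (\<lambda>_. D))"
proof -
  have "(\<lambda>S. S k) \<in> measurable (PiM {..<n} (\<lambda>_. D)) D"
    using measurable_component_singleton[of k "{..<n}" "\<lambda>_. D"] assms by simp
  then show ?thesis using hm by (rule measurable_compose)
qed

lemma Delta_int: "integrable (PiM {..<n} (\<lambda>_. D)) (\<lambda>S. norm (Delta s S))"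
proof -
  interpret D: prob_space D by (rule PD)
  interpret P: prob_space "PiM {..<n} (\<lambda>_. D)" by (rule prob_space_PiM) (rule PD)
  define v where "v = gd_pop \<eta> g D s"
  define h where "h z = g v z - mu v" for z
  have hm[measurable]: "h \<in> borel_measurable D" unfolding h_def by measurable
  have hb: "norm (h z) \<le> 2 * L" if "z \<in> space D" for z
    using norm_triangle_ineq4[of "g v z" "mu v"] g_bound[OF that, of v] mu_bound[of v]
    by (simp add: h_def)
  have h0: "(\<integral>z. h z \<partial>D) = 0"
    unfolding h_def using g_int[of v] by (simp add: Bochner_Integration.integral_diff D.prob_space mu_def)
  have nz: "real n \<noteq> 0" using n1 by simp
  have DE: "Delta s S = (1 / real n) *\<^sub>R (\<Sum>i<n. h (S i))" for S
    using nz by (simp add: Delta_def GS_def h_def v_def sum_subtractf scaleR_diff_right scaleR_scaleR sum_constant_scaleR)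
  have sp: "S \<in> space (PiM {..<n} (\<lambda>_. D)) \<Longrightarrow> i < n \<Longrightarrow> S i \<in> space D" for S i
    by (auto simp: space_PiM PiE_iff)
  have Xm: "(\<lambda>S. norm (Delta s S)) \<in> borel_measurable (PiM {..<n} (\<lambda>_. D))"
  proof -
    have sm[measurable]: "(\<lambda>S. \<Sum>i<n. h (S i)) \<in> borel_measurable (PiM {..<n} (\<lambda>_. D))"
      by (rule borel_measurable_sum) (rule comp_meas[OF hm], simp)
    show ?thesis unfolding DE by measurable
  qed
  have Xb: "norm (Delta s S) \<le> 2 * L" if "S \<in> space (PiM {..<n} (\<lambda>_. D))" for S
  proof -
    have "norm (\<Sum>i<n. h (S i)) \<le> (\<Sum>i<n. 2 * L)"
      by (rule order_trans[OF norm_sum sum_mono]) (use hb sp[OF that] in auto)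
    then show ?thesis using n1 by (simp add: DE field_simps)
  qed
  have Xint: "integrable (PiM {..<n} (\<lambda>_. D)) (\<lambda>S. norm (Delta s S))"
    by (rule P.integrable_const_bound[where B="2*L"]) (auto simp: Xb Xm)
  show ?thesis by (rule Xint)
qed

lemma E_Delta: "(\<integral>S. norm (Delta s S) \<partial>(PiM {..<n} (\<lambda>_. D))) \<le> 2 * L / sqrt (real n)"
proof -
  interpret D: prob_space D by (rule PD)
  interpret P: prob_space "PiM {..<n} (\<lambda>_. D)" by (rule prob_space_PiM) (rule PD)
  define v where "v = gd_pop \<eta> g D s"
  define h where "h z = g v z - mu v" for z
  have hm[measurable]: "h \<in> borel_measurable D" unfolding h_def by measurable
  have hb: "norm (h z) \<le> 2 * L" if "z \<in> space D" for z
    using norm_triangle_ineq4[of "g v z" "mu v"] g_bound[OF that, of v] mu_bound[of v]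
    by (simp add: h_def)
  have h0: "(\<integral>z. h z \<partial>D) = 0"
    unfolding h_def using g_int[of v] by (simp add: Bochner_Integration.integral_diff D.prob_space mu_def)
  have nz: "real n \<noteq> 0" using n1 by simp
  have DE: "Delta s S = (1 / real n) *\<^sub>R (\<Sum>i<n. h (S i))" for S
    using nz by (simp add: Delta_def GS_def h_def v_def sum_subtractf scaleR_diff_right scaleR_scaleR sum_constant_scaleR)
  have sp: "S \<in> space (PiM {..<n} (\<lambda>_. D)) \<Longrightarrow> i < n \<Longrightarrow> S i \<in> space D" for S i
    by (auto simp: space_PiM PiE_iff)
  have Xm: "(\<lambda>S. norm (Delta s S)) \<in> borel_measurable (PiM {..<n} (\<lambda>_. D))"
  proof -
    have sm[measurable]: "(\<lambda>S. \<Sum>i<n. h (S i)) \<in> borel_measurable (PiM {..<n} (\<lambda>_. D))"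
      by (rule borel_measurable_sum) (rule comp_meas[OF hm], simp)
    show ?thesis unfolding DE by measurable
  qed
  have Xb: "norm (Delta s S) \<le> 2 * L" if "S \<in> space (PiM {..<n} (\<lambda>_. D))" for S
  proof -
    have "norm (\<Sum>i<n. h (S i)) \<le> (\<Sum>i<n. 2 * L)"
      by (rule order_trans[OF norm_sum sum_mono]) (use hb sp[OF that] in auto)
    then show ?thesis using n1 by (simp add: DE field_simps)
  qed
  have Xint: "integrable (PiM {..<n} (\<lambda>_. D)) (\<lambda>S. norm (Delta s S))"
    by (rule P.integrable_const_bound[where B="2*L"]) (auto simp: Xb Xm)
  have X2int: "integrable (PiM {..<n} (\<lambda>_. D)) (\<lambda>S. (norm (Delta s S))^2)"
  proof (rule P.integrable_const_bound[where B="(2*L)^2"])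
    show "AE S in PiM {..<n} (\<lambda>_. D). norm ((norm (Delta s S))^2) \<le> (2*L)^2"
    proof (rule AE_I2)
      fix S assume "S \<in> space (PiM {..<n} (\<lambda>_. D))"
      then have "(norm (Delta s S))^2 \<le> (2*L)^2" using Xb by (intro power_mono) auto
      then show "norm ((norm (Delta s S))^2) \<le> (2*L)^2" by simp
    qed
  qed (use Xm in measurable)
  have "(\<integral>S. (norm (Delta s S))^2 \<partial>(PiM {..<n} (\<lambda>_. D)))
      = (\<integral>S. (1 / real n)^2 * norm (\<Sum>i<n. h (S i))^2 \<partial>(PiM {..<n} (\<lambda>_. D)))"
    by (intro Bochner_Integration.integral_cong refl) (simp add: DE power_mult_distrib power_divide)
  also have "\<dots> = (1 / real n)^2 * (\<integral>S. norm (\<Sum>i<n. h (S i))^2 \<partial>(PiM {..<n} (\<lambda>_. D)))"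
    by (rule integral_mult_right_zero)
  also have "\<dots> \<le> (1 / real n)^2 * (real n * (2 * L)^2)"
    by (intro mult_left_mono E_sq_sum[OF hm hb h0]) auto
  also have "\<dots> = (2 * L)^2 / real n" using nz by (simp add: power2_eq_square field_simps)
  finally have E2: "(\<integral>S. (norm (Delta s S))^2 \<partial>(PiM {..<n} (\<lambda>_. D))) \<le> (2 * L)^2 / real n" .
  have "(\<integral>S. norm (Delta s S) \<partial>(PiM {..<n} (\<lambda>_. D)))^2 \<le> (\<integral>S. (norm (Delta s S))^2 \<partial>(PiM {..<n} (\<lambda>_. D)))"
    using P.variance_eq[OF Xint X2int] P.variance_positive[of "\<lambda>S. norm (Delta s S)"] by linarith
  with E2 have "(\<integral>S. norm (Delta s S) \<partial>(PiM {..<n} (\<lambda>_. D))) \<le> sqrt ((2 * L)^2 / real n)"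
    by (intro real_le_rsqrt) linarith
  also have "\<dots> = 2 * L / sqrt (real n)" using L_nonneg by (simp add: real_sqrt_divide real_sqrt_mult)
  finally show ?thesis .
qed

lemma main:
  "(\<integral>S. norm (gd_sample \<eta> g n S t - gd_pop \<eta> g D t) \<partial>(PiM {..<n} (\<lambda>_. D)))
     \<le> 4 * \<eta> * L * real t / sqrt (real n) + 4 * \<eta> * L * sqrt (real t)"
proof -
  interpret P: prob_space "PiM {..<n} (\<lambda>_. D)" by (rule prob_space_PiM) (rule PD)
  define Bd where "Bd S = 2 * \<eta> * (\<Sum>s<t. norm (Delta s S)) + 2 * \<eta> * L * sqrt (real t)" for S
  have L0: "L \<ge> 0" by (rule L_nonneg)
  have pw: "norm (gd_sample \<eta> g n S t - gd_pop \<eta> g D t) \<le> Bd S"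
    if S: "S \<in> space (PiM {..<n} (\<lambda>_. D))" for S
  proof -
    have Si: "\<forall>i<n. S i \<in> space D" using S by (auto simp: space_PiM PiE_iff)
    have "norm (gd_sample \<eta> g n S t - gd_pop \<eta> g D t)
       \<le> (2 * \<eta>) * (\<Sum>s<t. norm (Delta s S)) + (2 * \<eta> * L) * sqrt (real t)"
    proof (rule rec_bound[where d="\<lambda>t. norm (gd_sample \<eta> g n S t - gd_pop \<eta> g D t)"])
      fix t
      show "(norm (gd_sample \<eta> g n S (Suc t) - gd_pop \<eta> g D (Suc t)))^2
          \<le> (norm (gd_sample \<eta> g n S t - gd_pop \<eta> g D t))^2
             + 2 * \<eta> * norm (gd_sample \<eta> g n S t - gd_pop \<eta> g D t) * norm (Delta t S) + (2 * \<eta> * L)^2"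
        using step[OF Si, of t] by (simp add: power_mult_distrib)
    qed (use eta L0 in \<open>auto intro!: mult_nonneg_nonneg\<close>)
    then show ?thesis by (simp add: Bd_def)
  qed
  have Bint: "integrable (PiM {..<n} (\<lambda>_. D)) Bd"
    unfolding Bd_def by (intro Bochner_Integration.integrable_add Bochner_Integration.integrable_mult_right
        Bochner_Integration.integrable_sum Delta_int) simp
  have EB: "(\<integral>S. Bd S \<partial>(PiM {..<n} (\<lambda>_. D))) \<le> 4 * \<eta> * L * real t / sqrt (real n) + 4 * \<eta> * L * sqrt (real t)"
  proof -
    have "(\<integral>S. Bd S \<partial>(PiM {..<n} (\<lambda>_. D)))
       = 2 * \<eta> * (\<Sum>s<t. (\<integral>S. norm (Delta s S) \<partial>(PiM {..<n} (\<lambda>_. D)))) + 2 * \<eta> * L * sqrt (real t)"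
      unfolding Bd_def
      by (simp add: Bochner_Integration.integral_add Bochner_Integration.integrable_mult_right
          Bochner_Integration.integrable_sum Delta_int Bochner_Integration.integral_sum P.prob_space)
    also have "\<dots> \<le> 2 * \<eta> * (\<Sum>s<t. 2 * L / sqrt (real n)) + 2 * \<eta> * L * sqrt (real t)"
      using eta by (intro add_mono[OF mult_left_mono[OF sum_mono[OF E_Delta]] order_refl]) auto
    also have "\<dots> \<le> 4 * \<eta> * L * real t / sqrt (real n) + 4 * \<eta> * L * sqrt (real t)"
    proof (rule add_mono)
      show "2 * \<eta> * (\<Sum>s<t. 2 * L / sqrt (real n)) \<le> 4 * \<eta> * L * real t / sqrt (real n)"
        by (simp add: mult_ac)
      have "0 \<le> \<eta> * L * sqrt (real t)" using eta L0 by simp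
      then show "2 * \<eta> * L * sqrt (real t) \<le> 4 * \<eta> * L * sqrt (real t)" by linarith
    qed
    finally show ?thesis .
  qed
  show ?thesis
  proof (cases "integrable (PiM {..<n} (\<lambda>_. D)) (\<lambda>S. norm (gd_sample \<eta> g n S t - gd_pop \<eta> g D t))")
    case True
    have "(\<integral>S. norm (gd_sample \<eta> g n S t - gd_pop \<eta> g D t) \<partial>(PiM {..<n} (\<lambda>_. D)))
        \<le> (\<integral>S. Bd S \<partial>(PiM {..<n} (\<lambda>_. D)))"
      by (rule integral_mono[OF True Bint pw])
    with EB show ?thesis by linarith
  next
    case False
    then show ?thesis using eta L0 by (simp add: not_integrable_integral_eq)
  qed
qed

end

theorem lemma5p1:
  fixes D :: "'z measure"
    and f :: "'a::euclidean_space \<Rightarrow> 'z \<Rightarrow> real"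
    and g :: "'a \<Rightarrow> 'z \<Rightarrow> 'a"
    and L \<eta> :: real and T n :: nat
  assumes "prob_space D"
    and "\<forall>z\<in>space D. convex_on UNIV (\<lambda>w. f w z)"
    and "\<forall>z\<in>space D. L-lipschitz_on UNIV (\<lambda>w. f w z)"
    and "\<forall>z\<in>space D. \<forall>w. is_subgradient (\<lambda>u. f u z) w (g w z)"
    and "(\<lambda>(w, z). g w z) \<in> borel_measurable (borel \<Otimes>\<^sub>M D)"
    and "\<eta> > 0"
    and "n \<ge> 1"
  shows "\<forall>t\<in>{1..T}.
           (\<integral>S. norm (gd_sample \<eta> g n S t - gd_pop \<eta> g D t) \<partial>(PiM {..<n} (\<lambda>_. D)))
             \<le> 4 * \<eta> * L * real t / sqrt (real n) + 4 * \<eta> * L * sqrt (real t)"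
proof -
  interpret gdset D f g L \<eta> n
    by (rule gdset.intro[OF assms(1) assms(3) assms(4) assms(5) assms(6) assms(7)])
  show ?thesis using main by blast
qed

end
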